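(* Let $q=2^m\geq 4$ and let $l$ be an integer with $q-4\leq l\leq q-1$. Then there exists a linear $l$-intersection pair of two MDS codes over $\mathbb{F}_q$ both with parameters $[q+2,q-1,4]_q$.
   Context: An $[n,k,d]_q$ linear code is a $k$-dimensional subspace of $\mathbb{F}_q^n$ with minimum Hamming distance $d$; it is MDS if $d=n-k+1$. Two linear codes $C_1,C_2\subseteq\mathbb{F}_q^n$ form a linear $l$-intersection pair if $\dim(C_1\cap C_2)=l$. *)

theory Defs
  imports Complex_Main "HOL-Library.Function_Algebras"
begin

text \<open>Vectors of F_q^n are modelled as functions nat => 'a vanishing outside {0..<n}.\<close>

definition vscale :: "'a::field \<Rightarrow> (nat \<Rightarrow> 'a) \<Rightarrow> (nat \<Rightarrow> 'a)" where
  "vscale c v = (\<lambda>i. c * v i)"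

definition fvecs :: "nat \<Rightarrow> (nat \<Rightarrow> 'a::zero) set" where
  "fvecs n = {v. \<forall>i\<ge>n. v i = 0}"

definition hamming_dist :: "nat \<Rightarrow> (nat \<Rightarrow> 'a) \<Rightarrow> (nat \<Rightarrow> 'a) \<Rightarrow> nat" where
  "hamming_dist n u v = card {i. i < n \<and> u i \<noteq> v i}"

definition min_dist :: "nat \<Rightarrow> (nat \<Rightarrow> 'a) set \<Rightarrow> nat" where
  "min_dist n C = Min {hamming_dist n u v | u v. u \<in> C \<and> v \<in> C \<and> u \<noteq> v}"

definition code_dim :: "(nat \<Rightarrow> 'a::field) set \<Rightarrow> nat" where
  "code_dim C = Vector_Spaces.vector_space.dim vscale C"

definition linear_code :: "nat \<Rightarrow> nat \<Rightarrow> nat \<Rightarrow> (nat \<Rightarrow> 'a::field) set \<Rightarrow> bool" where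
  "linear_code n k d C \<longleftrightarrow> C \<subseteq> fvecs n \<and> module.subspace vscale C
     \<and> code_dim C = k \<and> min_dist n C = d"

definition is_MDS :: "nat \<Rightarrow> (nat \<Rightarrow> 'a::field) set \<Rightarrow> bool" where
  "is_MDS n C \<longleftrightarrow> min_dist n C = n - code_dim C + 1"

definition l_intersection_pair :: "nat \<Rightarrow> (nat \<Rightarrow> 'a::field) set \<Rightarrow> (nat \<Rightarrow> 'a) set \<Rightarrow> bool" where
  "l_intersection_pair l C1 C2 \<longleftrightarrow> code_dim (C1 \<inter> C2) = l"

end

theory Submission
  imports Defs
begin

interpretation fv: vector_space "vscale :: 'a::field \<Rightarrow> (nat \<Rightarrow> 'a) \<Rightarrow> _"
  by unfold_locales (auto simp: vscale_def fun_eq_iff algebra_simps)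

lemma sum_fun_apply: "(sum f A) (i::'b) = (\<Sum>x\<in>A. f x i)"
  by (induction A rule: infinite_finite_induct) auto

lemma dim_by_coords:
  fixes V :: "(nat \<Rightarrow> 'a::field) set"
  assumes sub: "fv.subspace V" and fin: "finite S"
    and b: "\<And>s. s \<in> S \<Longrightarrow> b s \<in> V"
    and bs: "\<And>s t. s \<in> S \<Longrightarrow> t \<in> S \<Longrightarrow> b s t = (if s = t then 1 else 0)"
    and z: "\<And>v. v \<in> V \<Longrightarrow> (\<forall>s\<in>S. v s = 0) \<Longrightarrow> v = 0"
  shows "fv.dim V = card S"
proof (rule fv.dim_unique[of "b ` S"])
  show "b ` S \<subseteq> V" using b by auto
  have inj: "inj_on b S"
    by (rule inj_onI) (metis bs one_neq_zero)
  then show "card (b ` S) = card S" by (simp add: card_image)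
  show "V \<subseteq> fv.span (b ` S)"
  proof
    fix v assume v: "v \<in> V"
    define w where "w = (\<Sum>s\<in>S. vscale (v s) (b s))"
    have wsp: "w \<in> fv.span (b ` S)" unfolding w_def
      by (intro fv.span_sum fv.span_scale fv.span_base) auto
    have wV: "w \<in> V" unfolding w_def
      by (intro fv.subspace_sum[OF sub] fv.subspace_scale[OF sub] b)
    have wt: "w t = v t" if "t \<in> S" for t
    proof -
      have "w t = (\<Sum>s\<in>S. v s * b s t)" unfolding w_def sum_fun_apply vscale_def by simp
      also have "\<dots> = (\<Sum>s\<in>S. if s = t then v t else 0)"
        by (rule sum.cong) (auto simp: bs that)
      also have "\<dots> = v t" using fin that by simp
      finally show ?thesis .
    qed
    have "v - w = 0" using z[of "v - w"] fv.subspace_diff[OF sub v wV] wt by auto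
    then show "v \<in> fv.span (b ` S)" using wsp by simp
  qed
  show "fv.independent (b ` S)"
  proof
    assume "fv.dependent (b ` S)"
    then obtain u where u: "\<exists>x\<in>b ` S. u x \<noteq> 0" "(\<Sum>x\<in>b ` S. vscale (u x) x) = 0"
      using fv.dependent_finite fin by blast
    then obtain t where t: "t \<in> S" "u (b t) \<noteq> 0" by auto
    have "0 = (\<Sum>x\<in>b ` S. vscale (u x) x) t" using u by simp
    also have "\<dots> = (\<Sum>s\<in>S. u (b s) * b s t)"
      by (simp add: sum_fun_apply vscale_def sum.reindex[OF inj])
    also have "\<dots> = (\<Sum>s\<in>S. if s = t then u (b t) else 0)"
      by (rule sum.cong) (auto simp: bs t)
    also have "\<dots> = u (b t)" using fin t by simp
    finally show False using t by simp
  qed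
qed

definition wt :: "nat \<Rightarrow> (nat \<Rightarrow> 'a::zero) \<Rightarrow> nat" where
  "wt n v = card {i. i < n \<and> v i \<noteq> 0}"

lemma min_dist_by_wt:
  fixes C :: "(nat \<Rightarrow> 'a::field) set"
  assumes sub: "fv.subspace C" and d: "d > 0"
    and lb: "\<And>v. v \<in> C \<Longrightarrow> v \<noteq> 0 \<Longrightarrow> wt n v \<ge> d"
    and ex: "w \<in> C" "wt n w = d"
  shows "min_dist n C = d"
  unfolding min_dist_def
proof (rule Min_eqI)
  have hd: "hamming_dist n u v = wt n (u - v)" for u v :: "nat \<Rightarrow> 'a"
    by (simp add: hamming_dist_def wt_def)
  show "finite {hamming_dist n u v |u v. u \<in> C \<and> v \<in> C \<and> u \<noteq> v}"
  proof (rule finite_subset[of _ "{..n}"])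
    show "{hamming_dist n u v |u v. u \<in> C \<and> v \<in> C \<and> u \<noteq> v} \<subseteq> {..n}"
    proof -
      have hb: "hamming_dist n u v \<le> n" for u v :: "nat \<Rightarrow> 'a"
      proof -
        have "hamming_dist n u v \<le> card {..<n}" unfolding hamming_dist_def
          by (rule card_mono) auto
        then show ?thesis by simp
      qed
      show ?thesis using hb by auto
    qed
  qed simp
  show "d \<le> y" if "y \<in> {hamming_dist n u v |u v. u \<in> C \<and> v \<in> C \<and> u \<noteq> v}" for y
  proof -
    from that obtain u v where y: "y = hamming_dist n u v" "u \<in> C" "v \<in> C" "u \<noteq> v" by blast
    then show "d \<le> y" unfolding y(1) hd
      using lb[of "u - v"] fv.subspace_diff[OF sub y(2) y(3)] y(4) by simp
  qed
  have "w \<noteq> 0" using ex d by (auto simp: wt_def)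
  moreover have "0 \<in> C" using sub fv.subspace_0 by blast
  moreover have "hamming_dist n w 0 = d" using ex by (simp add: hd)
  ultimately show "d \<in> {hamming_dist n u v |u v. u \<in> C \<and> v \<in> C \<and> u \<noteq> v}"
    using ex(1) by blast
qed

lemma card_of_nat_zero:
  "(of_nat (card (UNIV::'a::{ring_1,finite} set)) :: 'a) = 0"
proof -
  have "(\<Sum>x\<in>(UNIV::'a set). x + 1) = (\<Sum>x\<in>UNIV. x)"
  proof (rule sum.reindex_bij_witness[where i="\<lambda>x. x - 1" and j="\<lambda>x. x + 1"]) qed auto
  then show ?thesis by (simp add: sum.distrib)
qed

lemma char2:
  assumes "card (UNIV::'a::{field,finite} set) = 2 ^ m" "2 ^ m \<ge> (4::nat)"
  shows "(2::'a) = 0"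
proof -
  have "m \<noteq> 0" using assms(2) by (cases m) auto
  have "(of_nat (2 ^ m) :: 'a) = 0" using card_of_nat_zero[where 'a='a] assms(1) by simp
  then have "(2::'a) ^ m = 0" by simp
  then show ?thesis by simp
qed

definition code :: "nat \<Rightarrow> (nat \<Rightarrow> 'a) \<Rightarrow> (nat \<Rightarrow> 'a::field) \<Rightarrow> (nat \<Rightarrow> 'a) set" where
  "code q e \<mu> = {v. v \<in> fvecs (q+2) \<and> (\<Sum>i<q. \<mu> i * v i) = 0
      \<and> (\<Sum>i<q. \<mu> i * e i * v i) + v q = 0 \<and> (\<Sum>i<q. \<mu> i * (e i)^2 * v i) + v (Suc q) = 0}"

definition gv :: "nat \<Rightarrow> (nat \<Rightarrow> 'a) \<Rightarrow> (nat \<Rightarrow> 'a::field) \<Rightarrow> nat \<Rightarrow> nat \<Rightarrow> nat \<Rightarrow> 'a" where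
  "gv q e \<mu> s r = (\<lambda>i. if i = s then 1 else if i = r then - (\<mu> s / \<mu> r)
     else if i = q then - (\<mu> s * (e s - e r)) else if i = Suc q then - (\<mu> s * ((e s)^2 - (e r)^2)) else 0)"

lemma code_subspace: "fv.subspace (code q e \<mu>)"
proof (rule fv.subspaceI)
  show "0 \<in> code q e \<mu>" by (simp add: code_def fvecs_def)
  fix x y assume "x \<in> code q e \<mu>" "y \<in> code q e \<mu>"
  then show "x + y \<in> code q e \<mu>"
  proof -
    assume x: "x \<in> code q e \<mu>" and y: "y \<in> code q e \<mu>"
    have "(\<Sum>i<q. \<mu> i * (x i + y i)) = (\<Sum>i<q. \<mu> i * x i) + (\<Sum>i<q. \<mu> i * y i)"
      by (simp add: sum.distrib algebra_simps)
    also have "\<dots> = 0" using x y by (simp add: code_def)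
    finally have 1: "(\<Sum>i<q. \<mu> i * (x i + y i)) = 0" .
    have "(\<Sum>i<q. \<mu> i * e i * (x i + y i)) + (x q + y q) = ((\<Sum>i<q. \<mu> i * e i * x i) + x q) + ((\<Sum>i<q. \<mu> i * e i * y i) + y q)"
      by (simp add: sum.distrib algebra_simps)
    also have "\<dots> = 0" using x y by (simp add: code_def)
    finally have 2: "(\<Sum>i<q. \<mu> i * e i * (x i + y i)) + (x q + y q) = 0" .
    have "(\<Sum>i<q. \<mu> i * (e i)^2 * (x i + y i)) + (x (Suc q) + y (Suc q)) = ((\<Sum>i<q. \<mu> i * (e i)^2 * x i) + x (Suc q)) + ((\<Sum>i<q. \<mu> i * (e i)^2 * y i) + y (Suc q))"
      by (simp add: sum.distrib algebra_simps)
    also have "\<dots> = 0" using x y by (simp add: code_def)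
    finally have 3: "(\<Sum>i<q. \<mu> i * (e i)^2 * (x i + y i)) + (x (Suc q) + y (Suc q)) = 0" .
    show ?thesis using x y 1 2 3 by (simp add: code_def fvecs_def)
  qed
next
  fix c x assume "x \<in> code q e \<mu>"
  then show "vscale c x \<in> code q e \<mu>"
  proof -
    assume x: "x \<in> code q e \<mu>"
    have "(\<Sum>i<q. \<mu> i * (c * x i)) = c * (\<Sum>i<q. \<mu> i * x i)"
      by (simp add: sum_distrib_left algebra_simps)
    moreover have "(\<Sum>i<q. \<mu> i * e i * (c * x i)) + c * x q = c * ((\<Sum>i<q. \<mu> i * e i * x i) + x q)"
      by (simp add: sum_distrib_left algebra_simps)
    moreover have "(\<Sum>i<q. \<mu> i * (e i)^2 * (c * x i)) + c * x (Suc q) = c * ((\<Sum>i<q. \<mu> i * (e i)^2 * x i) + x (Suc q))"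
      by (simp add: sum_distrib_left algebra_simps)
    ultimately show ?thesis using x by (simp add: code_def fvecs_def vscale_def)
  qed
qed

lemma sum_two:
  fixes q :: nat and f :: "nat \<Rightarrow> 'a::comm_monoid_add"
  assumes "s < q" "r < q" "s \<noteq> r" "\<And>i. i < q \<Longrightarrow> i \<noteq> s \<Longrightarrow> i \<noteq> r \<Longrightarrow> f i = 0"
  shows "(\<Sum>i<q. f i) = f s + f r"
proof -
  have "(\<Sum>i<q. f i) = (\<Sum>i\<in>{s,r}. f i)"
    using assms by (intro sum.mono_neutral_right) auto
  then show ?thesis using assms by simp
qed

lemma gv_in:
  assumes "s < q" "r < q" "s \<noteq> r" "\<mu> r \<noteq> 0"
  shows "gv q e \<mu> s r \<in> code q e \<mu>"
proof -
  let ?g = "gv q e \<mu> s r"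
  have g: "\<And>i. i < q \<Longrightarrow> i \<noteq> s \<Longrightarrow> i \<noteq> r \<Longrightarrow> ?g i = 0" by (simp add: gv_def)
  have gs: "?g s = 1" and gr: "?g r = - (\<mu> s / \<mu> r)" using assms by (auto simp: gv_def)
  have gq: "?g q = - (\<mu> s * (e s - e r))" "?g (Suc q) = - (\<mu> s * ((e s)^2 - (e r)^2))"
    using assms by (auto simp: gv_def)
  have "(\<Sum>i<q. \<mu> i * ?g i) = \<mu> s * ?g s + \<mu> r * ?g r"
    by (rule sum_two) (use assms g in auto)
  moreover have "(\<Sum>i<q. \<mu> i * e i * ?g i) = \<mu> s * e s * ?g s + \<mu> r * e r * ?g r"
    by (rule sum_two) (use assms g in auto)
  moreover have "(\<Sum>i<q. \<mu> i * (e i)^2 * ?g i) = \<mu> s * (e s)^2 * ?g s + \<mu> r * (e r)^2 * ?g r"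
    by (rule sum_two) (use assms g in auto)
  moreover have "?g \<in> fvecs (q+2)" using assms by (auto simp: gv_def fvecs_def)
  ultimately show ?thesis using assms unfolding code_def
    by (simp add: gs gr gq field_simps)
qed

lemma char2_sum:
  fixes x y :: "'a::field"
  assumes "(2::'a) = 0" "x \<noteq> y"
  shows "x^2 - y^2 \<noteq> 0"
proof -
  have "x + y = x - y + 2 * y" by simp
  then have "x + y = x - y" using assms by simp
  then have "x^2 - y^2 = (x - y) * (x - y)" by (simp add: power2_eq_square algebra_simps)
  then show ?thesis using assms by simp
qed

lemma gv_wt:
  assumes "s < q" "r < q" "s \<noteq> r" "\<mu> s \<noteq> 0" "\<mu> r \<noteq> 0" "e s \<noteq> e r" "(2::'a::field) = 0"
  shows "wt (q+2) (gv q e (\<mu>::nat \<Rightarrow> 'a) s r) = 4"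
proof -
  have "{i. i < q+2 \<and> gv q e \<mu> s r i \<noteq> 0} = {s, r, q, Suc q}"
    using assms char2_sum[OF assms(7) assms(6)] by (auto simp: gv_def)
  then show ?thesis using assms by (simp add: wt_def)
qed

lemma vandermonde3:
  fixes a b c x y z :: "'a::field"
  assumes "x \<noteq> y" "y \<noteq> z" "x \<noteq> z"
    and "a + b + c = 0" "a * x + b * y + c * z = 0" "a * x^2 + b * y^2 + c * z^2 = 0"
  shows "a = 0"
proof -
  have "a * ((x - y) * (x - z)) = (a * x^2 + b * y^2 + c * z^2) - (y + z) * (a * x + b * y + c * z) + y * z * (a + b + c)"
    by (simp add: power2_eq_square algebra_simps)
  then have "a * ((x - y) * (x - z)) = 0" using assms by simp
  then show ?thesis using assms by simp
qed

lemma wt_ge4: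
  fixes \<mu> e :: "nat \<Rightarrow> 'a::field"
  assumes mu: "\<And>i. i < q \<Longrightarrow> \<mu> i \<noteq> 0" and inj: "inj_on e {..<q}" and two: "(2::'a) = 0"
    and v: "v \<in> code q e \<mu>" and nz: "v \<noteq> 0"
  shows "4 \<le> wt (q+2) v"
proof -
  define A where "A = {i. i < q \<and> v i \<noteq> 0}"
  define P where "P = {i. i < q+2 \<and> v i \<noteq> 0}"
  have finP: "finite P" unfolding P_def by simp
  have finA: "finite A" unfolding A_def by simp
  have AP: "A \<subseteq> P" unfolding A_def P_def by auto
  have wP: "wt (q+2) v = card P" unfolding wt_def P_def by simp
  have red: "(\<Sum>i<q. f i * v i) = (\<Sum>i\<in>A. f i * v i)" for f
    by (rule sum.mono_neutral_right) (auto simp: A_def)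
  have vf: "v \<in> fvecs (q+2)" and e1: "(\<Sum>i\<in>A. \<mu> i * v i) = 0"
    and e2: "(\<Sum>i\<in>A. \<mu> i * e i * v i) + v q = 0"
    and e3: "(\<Sum>i\<in>A. \<mu> i * (e i)^2 * v i) + v (Suc q) = 0"
    using v red[of \<mu>] red[of "\<lambda>i. \<mu> i * e i"] red[of "\<lambda>i. \<mu> i * (e i)^2"]
    by (auto simp: code_def)
  have Aq: "a \<in> A \<Longrightarrow> a < q \<and> v a \<noteq> 0" for a by (simp add: A_def)
  have qP: "v q \<noteq> 0 \<Longrightarrow> q \<in> P" "v (Suc q) \<noteq> 0 \<Longrightarrow> Suc q \<in> P" by (auto simp: P_def)
  consider "card A = 0" | "card A = 1" | "card A = 2" | "card A = 3" | "card A \<ge> 4" by linarith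
  then show ?thesis
  proof cases
    case 1
    then have "A = {}" using finA by simp
    then have "v q = 0" "v (Suc q) = 0" using e2 e3 by auto
    moreover have "v i = 0" if "i < q" for i using \<open>A = {}\<close> that by (auto simp: A_def)
    moreover have "v i = 0" if "i \<ge> q+2" for i using vf that by (simp add: fvecs_def)
    ultimately have "v = 0"
      by (metis (full_types) linorder_not_le less_Suc_eq add_2_eq_Suc' zero_fun_def ext)
    then show ?thesis using nz by simp
  next
    case 2
    then obtain a where "A = {a}" by (auto simp: card_1_singleton_iff)
    then show ?thesis using e1 Aq[of a] mu[of a] by simp
  next
    case 3
    then obtain a b where ab: "A = {a, b}" "a \<noteq> b" by (auto simp: card_2_iff)
    have a: "a < q" "v a \<noteq> 0" and b: "b < q" "v b \<noteq> 0" using Aq ab by auto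
    have eab: "e a \<noteq> e b" using inj a b ab by (auto dest: inj_onD)
    define \<alpha> where "\<alpha> = \<mu> a * v a"
    have an: "\<alpha> \<noteq> 0" using a mu unfolding \<alpha>_def by simp
    have bb: "\<mu> b * v b = - \<alpha>" using e1 ab unfolding \<alpha>_def by (simp add: add_eq_0_iff)
    have "v q + (\<mu> a * e a * v a + \<mu> b * e b * v b) = 0" using e2 ab by (simp add: add.commute)
    then have "v q = - (\<mu> a * e a * v a + \<mu> b * e b * v b)" by (simp only: eq_neg_iff_add_eq_0)
    also have "\<dots> = - (\<mu> a * e a * v a + e b * (\<mu> b * v b))" by (simp add: algebra_simps)
    also have "\<dots> = - (\<alpha> * (e a - e b))" unfolding bb unfolding \<alpha>_def by (simp add: algebra_simps)
    finally have vq: "v q \<noteq> 0" using an eab by simp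
    have "v (Suc q) + (\<mu> a * (e a)^2 * v a + \<mu> b * (e b)^2 * v b) = 0" using e3 ab by (simp add: add.commute)
    then have "v (Suc q) = - (\<mu> a * (e a)^2 * v a + \<mu> b * (e b)^2 * v b)" by (simp only: eq_neg_iff_add_eq_0)
    also have "\<dots> = - (\<mu> a * (e a)^2 * v a + (e b)^2 * (\<mu> b * v b))" by (simp add: algebra_simps)
    also have "\<dots> = - (\<alpha> * ((e a)^2 - (e b)^2))" unfolding bb unfolding \<alpha>_def by (simp add: algebra_simps)
    finally have vq2: "v (Suc q) \<noteq> 0" using an char2_sum[OF two eab] by simp
    have "{a, b, q, Suc q} \<subseteq> P" using AP ab qP vq vq2 by auto
    then have "card {a, b, q, Suc q} \<le> card P" by (rule card_mono[OF finP])
    moreover have "card {a, b, q, Suc q} = 4" using a b ab by simp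
    ultimately show ?thesis using wP by simp
  next
    case 4
    then obtain a b c where abc: "A = {a, b, c}" "a \<noteq> b" "b \<noteq> c" "a \<noteq> c" by (auto simp: card_3_iff)
    have a: "a < q" "v a \<noteq> 0" and b: "b < q" "v b \<noteq> 0" and c: "c < q" "v c \<noteq> 0" using Aq abc by auto
    show ?thesis
    proof (cases "v q \<noteq> 0 \<or> v (Suc q) \<noteq> 0")
      case True
      then obtain z where z: "z \<in> P" "z = q \<or> z = Suc q" using qP by blast
      have "{a, b, c, z} \<subseteq> P" using AP abc z by auto
      then have "card {a, b, c, z} \<le> card P" by (rule card_mono[OF finP])
      moreover have "z \<noteq> a" "z \<noteq> b" "z \<noteq> c" using a b c z by auto
      moreover have "card {a, b, c, z} = 4" using abc calculation(2-4) by simp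
      ultimately show ?thesis using wP by simp
    next
      case False
      have eabc: "e a \<noteq> e b" "e b \<noteq> e c" "e a \<noteq> e c" using inj a b c abc by (auto dest: inj_onD)
      have "\<mu> a * v a = 0"
      proof (rule vandermonde3[OF eabc])
        show "\<mu> a * v a + \<mu> b * v b + \<mu> c * v c = 0" using e1 abc by (simp add: add.assoc)
        show "\<mu> a * v a * e a + \<mu> b * v b * e b + \<mu> c * v c * e c = 0"
          using e2 abc False by (simp add: algebra_simps)
        show "\<mu> a * v a * (e a)^2 + \<mu> b * v b * (e b)^2 + \<mu> c * v c * (e c)^2 = 0"
          using e3 abc False by (simp add: algebra_simps)
      qed
      then show ?thesis using a mu by simp
    qed
  next
    case 5
    then show ?thesis using wP card_mono[OF finP AP] by simp
  qed
qed

lemma code_zero: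
  fixes \<mu> e :: "nat \<Rightarrow> 'a::field"
  assumes mu: "\<mu> 0 \<noteq> 0" and q: "0 < q" and v: "v \<in> code q e \<mu>"
    and z: "\<forall>s\<in>{1..<q}. v s = 0"
  shows "v = 0"
proof -
  have vi: "v i = 0" if "0 < i" "i < q" for i using z that by auto
  have red: "(\<Sum>i<q. f i * v i) = (\<Sum>i\<in>{0}. f i * v i)" for f
    using q vi by (intro sum.mono_neutral_right) auto
  have "\<mu> 0 * v 0 = 0" using v red[of \<mu>] by (simp add: code_def)
  then have v0: "v 0 = 0" using mu by simp
  have vlt: "v i = 0" if "i < q" for i using vi v0 that by (cases "i = 0") auto
  have s0: "(\<Sum>i<q. f i * v i) = 0" for f using vlt by simp
  have "v q = 0" "v (Suc q) = 0" using v s0[of "\<lambda>i. \<mu> i * e i"] s0[of "\<lambda>i. \<mu> i * (e i)^2"]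
    by (auto simp: code_def)
  moreover have "v i = 0" if "i \<ge> q+2" for i using v that by (simp add: code_def fvecs_def)
  ultimately show "v = 0" using vlt
    by (metis (full_types) linorder_not_le less_Suc_eq add_2_eq_Suc' zero_fun_def ext)
qed

lemma code_dim:
  fixes \<mu> e :: "nat \<Rightarrow> 'a::field"
  assumes mu: "\<And>i. i < q \<Longrightarrow> \<mu> i \<noteq> 0" and q: "0 < q"
  shows "fv.dim (code q e \<mu>) = q - 1"
proof -
  have "fv.dim (code q e \<mu>) = card {1..<q}"
  proof (rule dim_by_coords[where b="\<lambda>s. gv q e \<mu> s 0"])
    show "fv.subspace (code q e \<mu>)" by (rule code_subspace)
    show "gv q e \<mu> s 0 \<in> code q e \<mu>" if "s \<in> {1..<q}" for s
      using that q mu by (intro gv_in) auto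
    show "gv q e \<mu> s 0 t = (if s = t then 1 else 0)" if "s \<in> {1..<q}" "t \<in> {1..<q}" for s t
      using that by (auto simp: gv_def)
    show "v = 0" if "v \<in> code q e \<mu>" "\<forall>s\<in>{1..<q}. v s = 0" for v
      using code_zero[OF mu[OF q] q that] .
  qed simp
  then show ?thesis by simp
qed

lemma vandermonde3_all:
  fixes a b c x y z :: "'a::field"
  assumes "x \<noteq> y" "y \<noteq> z" "x \<noteq> z"
    and "a + b + c = 0" "a * x + b * y + c * z = 0" "a * x^2 + b * y^2 + c * z^2 = 0"
  shows "a = 0 \<and> b = 0 \<and> c = 0"
proof -
  have "a * ((x - y) * (x - z)) = (a * x^2 + b * y^2 + c * z^2) - (y + z) * (a * x + b * y + c * z) + y * z * (a + b + c)"
    by (simp add: power2_eq_square algebra_simps)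
  then have "a * ((x - y) * (x - z)) = 0" using assms by simp
  moreover have "b * ((y - x) * (y - z)) = (a * x^2 + b * y^2 + c * z^2) - (x + z) * (a * x + b * y + c * z) + x * z * (a + b + c)"
    by (simp add: power2_eq_square algebra_simps)
  then have "b * ((y - x) * (y - z)) = 0" using assms by simp
  moreover have "c * ((z - x) * (z - y)) = (a * x^2 + b * y^2 + c * z^2) - (x + y) * (a * x + b * y + c * z) + x * y * (a + b + c)"
    by (simp add: power2_eq_square algebra_simps)
  then have "c * ((z - x) * (z - y)) = 0" using assms by simp
  ultimately show ?thesis using assms by auto
qed

lemma inter_code:
  fixes e :: "nat \<Rightarrow> 'a::field" and c :: 'a
  assumes c: "c \<noteq> 1" and inj: "inj_on e {..<q}" and T: "T \<subseteq> {1,2,3}" and q: "3 < q"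
  shows "code q e (\<lambda>_. 1) \<inter> code q e (\<lambda>i. if i \<in> T then c else 1)
       = {v \<in> code q e (\<lambda>_. 1). \<forall>i\<in>T. v i = 0}" (is "?L = ?R")
proof
  let ?\<mu> = "\<lambda>i. if i \<in> T then c else (1::'a)"
  show "?R \<subseteq> ?L"
  proof
    fix v assume v: "v \<in> ?R"
    have h1: "?\<mu> i * v i = v i" for i using v by auto
    have h2: "?\<mu> i * x * v i = x * v i" for i x using v by auto
    show "v \<in> ?L" using v by (simp add: code_def h1 h2)
  qed
  show "?L \<subseteq> ?R"
  proof
    fix v assume v: "v \<in> ?L"
    define t where "t i = (if i \<in> T then v i else 0)" for i
    have key: "f 1 * t 1 + f 2 * t 2 + f 3 * t 3 = 0"
      if eq: "(\<Sum>i<q. f i * v i) = (\<Sum>i<q. ?\<mu> i * f i * v i)" for f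
    proof -
      have pw: "?\<mu> i * f i * v i = f i * v i + (c - 1) * (f i * t i)" for i
        by (simp add: t_def algebra_simps)
      have "(\<Sum>i<q. ?\<mu> i * f i * v i) = (\<Sum>i<q. f i * v i) + (c - 1) * (\<Sum>i<q. f i * t i)"
        unfolding pw by (simp add: sum.distrib sum_distrib_left)
      then have "(c - 1) * (\<Sum>i<q. f i * t i) = 0" using eq by simp
      then have s0: "(\<Sum>i<q. f i * t i) = 0" using c by simp
      have "(\<Sum>i<q. f i * t i) = (\<Sum>i\<in>{1,2,3}. f i * t i)"
        using q T by (intro sum.mono_neutral_right) (auto simp: t_def)
      then show ?thesis using s0 by (simp add: add.assoc)
    qed
    have v1: "v \<in> code q e (\<lambda>_. 1)" and v2: "v \<in> code q e ?\<mu>" using v by auto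
    have A0: "(\<Sum>i<q. 1 * v i) = (\<Sum>i<q. ?\<mu> i * 1 * v i)"
    proof -
      have "(\<Sum>i<q. 1 * v i) = 0" "(\<Sum>i<q. ?\<mu> i * v i) = 0" using v1 v2 by (simp_all add: code_def)
      then show ?thesis by simp
    qed
    have A1: "(\<Sum>i<q. e i * v i) = (\<Sum>i<q. ?\<mu> i * e i * v i)"
    proof -
      have "(\<Sum>i<q. e i * v i) + v q = 0" "(\<Sum>i<q. ?\<mu> i * e i * v i) + v q = 0"
        using v1 v2 by (simp_all add: code_def)
      then show ?thesis by (metis add_right_cancel)
    qed
    have A2: "(\<Sum>i<q. (e i)^2 * v i) = (\<Sum>i<q. ?\<mu> i * (e i)^2 * v i)"
    proof -
      have "(\<Sum>i<q. (e i)^2 * v i) + v (Suc q) = 0" "(\<Sum>i<q. ?\<mu> i * (e i)^2 * v i) + v (Suc q) = 0"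
        using v1 v2 by (simp_all add: code_def)
      then show ?thesis by (metis add_right_cancel)
    qed
    have K0: "t 1 + t 2 + t 3 = 0" using key[of "\<lambda>_. 1", OF A0] by simp
    have K1: "t 1 * e 1 + t 2 * e 2 + t 3 * e 3 = 0" using key[of e, OF A1] by (simp add: mult.commute)
    have K2: "t 1 * (e 1)^2 + t 2 * (e 2)^2 + t 3 * (e 3)^2 = 0"
      using key[of "\<lambda>i. (e i)^2", OF A2] by (simp add: mult.commute)
    have d: "e 1 \<noteq> e 2" "e 2 \<noteq> e 3" "e 1 \<noteq> e 3"
      using inj q by (auto dest: inj_onD)
    have "t 1 = 0 \<and> t 2 = 0 \<and> t 3 = 0" by (rule vandermonde3_all[OF d K0 K1 K2])
    then have "\<forall>i\<in>T. v i = 0" using T by (auto simp: t_def)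
    then show "v \<in> ?R" using v1 by simp
  qed
qed

lemma code_good:
  fixes e \<nu> :: "nat \<Rightarrow> 'a::field"
  assumes nu: "\<And>i. i < q \<Longrightarrow> \<nu> i \<noteq> 0" and inj: "inj_on e {..<q}" and two: "(2::'a) = 0"
    and q: "4 \<le> q"
  shows "linear_code (q+2) (q-1) 4 (code q e \<nu>) \<and> is_MDS (q+2) (code q e \<nu>)"
proof -
  have dim: "code_dim (code q e \<nu>) = q - 1"
    unfolding code_dim_def using code_dim[OF nu] q by simp
  have e10: "e 1 \<noteq> e 0" using inj q by (auto dest: inj_onD)
  have md: "min_dist (q+2) (code q e \<nu>) = 4"
  proof (rule min_dist_by_wt[OF code_subspace])
    show "4 \<le> wt (q + 2) v" if "v \<in> code q e \<nu>" "v \<noteq> 0" for v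
      by (rule wt_ge4[OF nu inj two that])
    show "gv q e \<nu> 1 0 \<in> code q e \<nu>" using q nu by (intro gv_in) auto
    show "wt (q + 2) (gv q e \<nu> 1 0) = 4" using q nu e10 two by (intro gv_wt) auto
  qed simp
  have sub: "code q e \<nu> \<subseteq> fvecs (q+2)" by (auto simp: code_def)
  show ?thesis using dim md sub code_subspace[of q e \<nu>] q
    by (simp add: linear_code_def is_MDS_def)
qed

lemma main_q:
  fixes q l :: nat
  assumes card: "card (UNIV :: 'a::{field,finite} set) = q" and q: "4 \<le> q"
    and two: "(2::'a) = 0" and l1: "q - 4 \<le> l" and l2: "l \<le> q - 1"
  shows "\<exists>C1 C2 :: (nat \<Rightarrow> 'a) set.
           linear_code (q + 2) (q - 1) 4 C1 \<and> linear_code (q + 2) (q - 1) 4 C2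
         \<and> is_MDS (q + 2) C1 \<and> is_MDS (q + 2) C2
         \<and> l_intersection_pair l C1 C2"
proof -
  obtain e :: "nat \<Rightarrow> 'a" where "bij_betw e {0..<q} UNIV"
    using ex_bij_betw_nat_finite[of "UNIV :: 'a set"] card by auto
  then have inj: "inj_on e {..<q}" by (simp add: bij_betw_def lessThan_atLeast0)
  have "\<not> (UNIV :: 'a set) \<subseteq> {0, 1}"
  proof
    assume "(UNIV :: 'a set) \<subseteq> {0, 1}"
    then have "card (UNIV :: 'a set) \<le> card {0, 1::'a}" by (intro card_mono) auto
    also have "\<dots> \<le> 2" by (simp add: card_insert_le_m1)
    finally show False using card q by simp
  qed
  then obtain c :: 'a where c: "c \<noteq> 0" "c \<noteq> 1" by auto
  define j where "j = q - 1 - l"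
  have j3: "j \<le> 3" and lj: "l = q - 1 - j" using l1 l2 q unfolding j_def by auto
  define T where "T = {1..j}"
  have T: "T \<subseteq> {1,2,3}" using j3 unfolding T_def by auto
  have cardT: "card T = j" unfolding T_def by simp
  define \<mu> where "\<mu> = (\<lambda>i. if i \<in> T then c else (1::'a))"
  have g1: "linear_code (q+2) (q-1) 4 (code q e (\<lambda>_. 1)) \<and> is_MDS (q+2) (code q e (\<lambda>_. 1::'a))"
    by (rule code_good[OF _ inj two q]) simp
  have g2: "linear_code (q+2) (q-1) 4 (code q e \<mu>) \<and> is_MDS (q+2) (code q e \<mu>)"
    by (rule code_good[OF _ inj two q]) (simp add: \<mu>_def c)
  define I where "I = {v \<in> code q e (\<lambda>_. 1::'a). \<forall>i\<in>T. v i = 0}"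
  have int: "code q e (\<lambda>_. 1) \<inter> code q e \<mu> = I"
    unfolding I_def \<mu>_def using inter_code[OF c(2) inj T] q by simp
  have subI: "fv.subspace I"
  proof (rule fv.subspaceI)
    have s: "fv.subspace (code q e (\<lambda>_. 1::'a))" by (rule code_subspace)
    show "0 \<in> I" unfolding I_def using fv.subspace_0[OF s] by simp
    show "x + y \<in> I" if "x \<in> I" "y \<in> I" for x y
      using that fv.subspace_add[OF s] unfolding I_def by simp
    show "vscale c x \<in> I" if "x \<in> I" for c x
      using that fv.subspace_scale[OF s] unfolding I_def by (simp add: vscale_def)
  qed
  have dimI: "fv.dim I = card ({1..<q} - T)"
  proof (rule dim_by_coords[OF subI, where b="\<lambda>s. gv q e (\<lambda>_. 1) s 0"])
    show "gv q e (\<lambda>_. 1) s 0 \<in> I" if "s \<in> {1..<q} - T" for s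
    proof -
      have "gv q e (\<lambda>_. 1::'a) s 0 \<in> code q e (\<lambda>_. 1)" using that q by (intro gv_in) auto
      moreover have "\<forall>i\<in>T. gv q e (\<lambda>_. 1::'a) s 0 i = 0" using that T q by (auto simp: gv_def)
      ultimately show ?thesis unfolding I_def by simp
    qed
    show "gv q e (\<lambda>_. 1) s 0 t = (if s = t then 1 else 0)" if "s \<in> {1..<q} - T" "t \<in> {1..<q} - T" for s t
      using that by (auto simp: gv_def)
    show "v = 0" if "v \<in> I" "\<forall>s\<in>{1..<q} - T. v s = 0" for v
    proof (rule code_zero)
      show "v \<in> code q e (\<lambda>_. 1::'a)" using that unfolding I_def by simp
      show "\<forall>s\<in>{1..<q}. v s = 0" using that unfolding I_def by blast
    qed (use q in auto)
  qed simp
  have "card ({1..<q} - T) = (q - 1) - j"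
    using T q by (subst card_Diff_subset) (auto simp: cardT T_def)
  then have "code_dim (code q e (\<lambda>_. 1) \<inter> code q e \<mu>) = l"
    unfolding code_dim_def int dimI lj by simp
  then show ?thesis using g1 g2 unfolding l_intersection_pair_def by blast
qed

theorem theorem5:
  fixes m :: nat and l :: nat
  assumes "card (UNIV :: 'a::{field,finite} set) = 2 ^ m"
    and "2 ^ m \<ge> (4::nat)"
    and "2 ^ m - 4 \<le> l" and "l \<le> 2 ^ m - 1"
  shows "\<exists>C1 C2 :: (nat \<Rightarrow> 'a) set.
           linear_code (2^m + 2) (2^m - 1) 4 C1 \<and> linear_code (2^m + 2) (2^m - 1) 4 C2
         \<and> is_MDS (2^m + 2) C1 \<and> is_MDS (2^m + 2) C2
         \<and> l_intersection_pair l C1 C2"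
  by (rule main_q[OF assms(1) assms(2) char2[OF assms(1) assms(2)] assms(3) assms(4)])

end
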